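(* For every $n\ge1$ there is a bijection from the set of parking functions of size $n$ to the set of forests of rooted labelled unordered trees on the vertex set $\{1,\dots,n\}$ such that the number of increments of the initial cluster during the parking procedure of a parking function equals the number of max-records in the corresponding forest, and, for each $j$, the number of increments of amount $j$ of the initial cluster equals the number of max-record subtrees of size $j$ in the corresponding forest.
   Context: A parking function of size $n$ is a sequence $(s_1,\dots,s_n)\in\{1,\dots,n\}^n$ such that in the following parking procedure all drivers park: there are parking spaces $1,\dots,n$ on a one-way street, initially empty; drivers $1,\dots,n$ arrive in order and driver $k$ parks at the first free space among $s_k,s_k+1,\dots,n$ (if none exists he leaves). At each time of the procedure, the initial cluster is the maximal run of consecutive occupied spaces starting at space $1$ (empty if space $1$ is free); its size is its length. Step $k$ is an increment of the initial cluster of amount $j\ge1$ if the size of the initial cluster after step $k$ exceeds that after step $k-1$ by $j$. In a forest of rooted labelled trees, a max-record is a node whose label is the largest among all labels on the path from the root of its tree component to it; if $r_1,\dots,r_m$ are the max-records, the max-record subtree of $r_i$ is the largest subtree rooted at $r_i$ containing none of the other max-records. *)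

theory Defs
  imports Main
begin

text \<open>A sequence of size n is a list of length n (driver k has preference s!(k-1)).\<close>

definition can_park :: "nat \<Rightarrow> nat set \<Rightarrow> nat \<Rightarrow> bool" where
  "can_park n Occ a \<longleftrightarrow> (\<exists>p. a \<le> p \<and> p \<le> n \<and> p \<notin> Occ)"

definition park_step :: "nat \<Rightarrow> nat set \<Rightarrow> nat \<Rightarrow> nat set" where
  "park_step n Occ a =
     (if can_park n Occ a then insert (LEAST p. a \<le> p \<and> p \<le> n \<and> p \<notin> Occ) Occ else Occ)"

definition occupied :: "nat \<Rightarrow> nat list \<Rightarrow> nat \<Rightarrow> nat set" where
  "occupied n s k = fold (\<lambda>a Occ. park_step n Occ a) (take k s) {}"

definition parking_functions :: "nat \<Rightarrow> nat list set" where
  "parking_functions n =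
     {s. length s = n \<and> (\<forall>a\<in>set s. 1 \<le> a \<and> a \<le> n) \<and>
         (\<forall>k<n. can_park n (occupied n s k) (s ! k))}"

definition init_cluster :: "nat set \<Rightarrow> nat" where
  "init_cluster Occ = (GREATEST m. {1..m} \<subseteq> Occ)"

definition increment :: "nat \<Rightarrow> nat list \<Rightarrow> nat \<Rightarrow> nat" where
  "increment n s k = init_cluster (occupied n s k) - init_cluster (occupied n s (k - 1))"

definition num_increments :: "nat \<Rightarrow> nat list \<Rightarrow> nat" where
  "num_increments n s = card {k \<in> {1..n}. increment n s k \<ge> 1}"

definition num_increments_of :: "nat \<Rightarrow> nat list \<Rightarrow> nat \<Rightarrow> nat" where
  "num_increments_of n s j = card {k \<in> {1..n}. increment n s k = j}"

text \<open>A forest of rooted labelled unordered trees on vertex set {1..n} is encoded by its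
  parent function: par v is the parent of v, or 0 if v is a root; par v = 0 outside {1..n};
  acyclicity: iterating par from any vertex eventually reaches 0.\<close>

definition forests :: "nat \<Rightarrow> (nat \<Rightarrow> nat) set" where
  "forests n = {par. (\<forall>v. v \<notin> {1..n} \<longrightarrow> par v = 0) \<and>
                      (\<forall>v\<in>{1..n}. par v \<le> n) \<and>
                      (\<forall>v\<in>{1..n}. \<exists>k. (par ^^ k) v = 0)}"

definition ancestors :: "(nat \<Rightarrow> nat) \<Rightarrow> nat \<Rightarrow> nat set" where
  "ancestors par v = {(par ^^ k) v | k. k \<ge> 1 \<and> (par ^^ k) v \<noteq> 0}"

definition max_records :: "nat \<Rightarrow> (nat \<Rightarrow> nat) \<Rightarrow> nat set" where
  "max_records n par = {v \<in> {1..n}. \<forall>a \<in> ancestors par v. a \<le> v}"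

definition max_record_subtree :: "nat \<Rightarrow> (nat \<Rightarrow> nat) \<Rightarrow> nat \<Rightarrow> nat set" where
  "max_record_subtree n par r =
     {w \<in> {1..n}. \<exists>k. (par ^^ k) w = r \<and> (\<forall>i<k. (par ^^ i) w \<notin> max_records n par)}"

end

theory Submission
  imports Defs "HOL-Library.Multiset"
begin

definition cnt :: "nat list \<Rightarrow> nat \<Rightarrow> nat" where
  "cnt t i = length (filter (\<lambda>a. a \<le> i) t)"

lemma cnt_append[simp]: "cnt (xs @ ys) i = cnt xs i + cnt ys i"
  by (simp add: cnt_def)
lemma cnt_Nil[simp]: "cnt [] i = 0" by (simp add: cnt_def)
lemma cnt_Cons: "cnt (a # xs) i = (if a \<le> i then Suc (cnt xs i) else cnt xs i)"
  by (simp add: cnt_def)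
lemma cnt_le_length: "cnt t i \<le> length t" by (simp add: cnt_def)
lemma cnt_mono: "i \<le> i' \<Longrightarrow> cnt t i \<le> cnt t i'"
  unfolding cnt_def by (induction t) auto

lemma occupied_Suc:
  assumes "k < length s"
  shows "occupied n s (Suc k) = park_step n (occupied n s k) (s ! k)"
  using assms by (simp add: occupied_def take_Suc_conv_app_nth)

lemma occupied_0[simp]: "occupied n s 0 = {}" by (simp add: occupied_def)

lemma park_least:
  assumes "can_park n Occ a"
  defines "p \<equiv> (LEAST p. a \<le> p \<and> p \<le> n \<and> p \<notin> Occ)"
  shows "a \<le> p \<and> p \<le> n \<and> p \<notin> Occ" "\<And>q. a \<le> q \<Longrightarrow> q \<le> n \<Longrightarrow> q \<notin> Occ \<Longrightarrow> p \<le> q"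
proof -
  from assms(1) obtain q where "a \<le> q \<and> q \<le> n \<and> q \<notin> Occ" unfolding can_park_def by blast
  then show "a \<le> p \<and> p \<le> n \<and> p \<notin> Occ" unfolding p_def by (rule LeastI)
  show "\<And>q. a \<le> q \<Longrightarrow> q \<le> n \<Longrightarrow> q \<notin> Occ \<Longrightarrow> p \<le> q" unfolding p_def by (simp add: Least_le)
qed

lemma park_invariants:
  assumes vals: "\<forall>a\<in>set s. 1 \<le> a" and k: "k \<le> length s"
  shows "occupied n s k \<subseteq> {1..n} \<and> card (occupied n s k) \<le> k \<and>
         (\<forall>i. card (occupied n s k \<inter> {1..i}) \<le> cnt (take k s) i) \<and>
         (\<forall>q\<in>{1..n}. q \<notin> occupied n s k \<longrightarrow> cnt (take k s) q \<le> card (occupied n s k \<inter> {1..<q}))"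
  using k
proof (induction k)
  case 0
  then show ?case by simp
next
  case (Suc k)
  then have kl: "k < length s" by simp
  let ?O = "occupied n s k"
  let ?a = "s ! k"
  have a1: "1 \<le> ?a" using vals kl by simp
  have tk: "take (Suc k) s = take k s @ [?a]" using kl by (simp add: take_Suc_conv_app_nth)
  from Suc have IH: "?O \<subseteq> {1..n}" "card ?O \<le> k"
     "\<forall>i. card (?O \<inter> {1..i}) \<le> cnt (take k s) i"
     "\<forall>q\<in>{1..n}. q \<notin> ?O \<longrightarrow> cnt (take k s) q \<le> card (?O \<inter> {1..<q})" by auto
  have fin: "finite ?O" using IH(1) finite_subset by blast
  show ?case
  proof (cases "can_park n ?O ?a")
    case False
    then have eq: "occupied n s (Suc k) = ?O" using occupied_Suc[OF kl] by (simp add: park_step_def)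
    show ?thesis unfolding eq tk
    proof (intro conjI allI ballI impI)
      show "?O \<subseteq> {1..n}" by (rule IH(1))
      show "card ?O \<le> Suc k" using IH(2) by simp
      fix i show "card (?O \<inter> {1..i}) \<le> cnt (take k s @ [?a]) i" using IH(3) by (simp add: cnt_def) (meson le_SucI)
    next
      fix q assume q: "q \<in> {1..n}" "q \<notin> ?O"
      have "\<not> ?a \<le> q" using False q unfolding can_park_def by auto
      then show "cnt (take k s @ [?a]) q \<le> card (?O \<inter> {1..<q})" using IH(4) q by (simp add: cnt_def)
    qed
  next
    case True
    define p where "p = (LEAST p. ?a \<le> p \<and> p \<le> n \<and> p \<notin> ?O)"
    have P: "?a \<le> p" "p \<le> n" "p \<notin> ?O" using park_least(1)[OF True] unfolding p_def by auto
    have Pm: "\<And>q. ?a \<le> q \<Longrightarrow> q \<le> n \<Longrightarrow> q \<notin> ?O \<Longrightarrow> p \<le> q" using park_least(2)[OF True] unfolding p_def by auto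
    have eq: "occupied n s (Suc k) = insert p ?O" using occupied_Suc[OF kl] True by (simp add: park_step_def p_def)
    show ?thesis unfolding eq tk
    proof (intro conjI allI ballI impI)
      show "insert p ?O \<subseteq> {1..n}" using IH(1) P a1 by auto
      show "card (insert p ?O) \<le> Suc k" using IH(2) fin by (simp add: card_insert_if)
    next
      fix i
      have "insert p ?O \<inter> {1..i} = (if p \<le> i then insert p (?O \<inter> {1..i}) else ?O \<inter> {1..i})"
        using P a1 by auto
      then show "card (insert p ?O \<inter> {1..i}) \<le> cnt (take k s @ [?a]) i"
        using IH(3) P fin by (auto simp: cnt_def card_insert_if) (meson le_SucI)
    next
      fix q assume q: "q \<in> {1..n}" "q \<notin> insert p ?O"
      show "cnt (take k s @ [?a]) q \<le> card (insert p ?O \<inter> {1..<q})"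
      proof (cases "?a \<le> q")
        case True
        have "p \<le> q" using Pm[OF True] q by auto
        then have pq: "p < q" using q by auto
        have "insert p ?O \<inter> {1..<q} = insert p (?O \<inter> {1..<q})" using pq P a1 by auto
        moreover have "card (insert p (?O \<inter> {1..<q})) = Suc (card (?O \<inter> {1..<q}))"
          using fin P by simp
        ultimately show ?thesis using IH(4) q True by (simp add: cnt_def)
      next
        case False
        have "card (?O \<inter> {1..<q}) \<le> card (insert p ?O \<inter> {1..<q})"
          by (rule card_mono) (use fin in auto)
        moreover have "cnt (take k s) q \<le> card (?O \<inter> {1..<q})" using IH(4) q by auto
        ultimately show ?thesis using False by (simp add: cnt_def)
      qed
    qed
  qed
qed

definition good :: "nat \<Rightarrow> nat list \<Rightarrow> bool" where
  "good m t \<longleftrightarrow> (\<forall>i\<in>{1..m}. i \<le> cnt t i)"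

definition cl :: "nat list \<Rightarrow> nat" where
  "cl t = (GREATEST m. good m t)"

lemma good_0[simp]: "good 0 t" by (simp add: good_def)

lemma good_le: "good m t \<Longrightarrow> m \<le> length t"
proof (cases "m = 0")
  case False
  assume "good m t"
  then have "m \<le> cnt t m" using False unfolding good_def by auto
  then show ?thesis using cnt_le_length[of t m] by linarith
qed simp

lemma good_mono: "good m t \<Longrightarrow> m' \<le> m \<Longrightarrow> good m' t"
  unfolding good_def by auto

lemma cl_good: "good (cl t) t"
  unfolding cl_def by (rule GreatestI_nat[of _ 0 "length t"]) (auto intro: good_le)

lemma cl_max: "good m t \<Longrightarrow> m \<le> cl t"
  unfolding cl_def by (rule Greatest_le_nat[of _ _ "length t"]) (auto intro: good_le)

lemma cl_eqI: "good c t \<Longrightarrow> (\<And>m. good m t \<Longrightarrow> m \<le> c) \<Longrightarrow> cl t = c"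
  using cl_good cl_max le_antisym by blast

lemma cl_le_length: "cl t \<le> length t"
  using cl_good good_le by blast

lemma occ_card_step:
  assumes "k < length s"
  shows "card (occupied n s (Suc k)) \<le> Suc (card (occupied n s k))"
    "\<not> can_park n (occupied n s k) (s ! k) \<Longrightarrow> occupied n s (Suc k) = occupied n s k"
    "can_park n (occupied n s k) (s ! k) \<Longrightarrow> finite (occupied n s k) \<Longrightarrow> card (occupied n s (Suc k)) = Suc (card (occupied n s k))"
proof -
  show "card (occupied n s (Suc k)) \<le> Suc (card (occupied n s k))"
    using occupied_Suc[OF assms] by (simp add: park_step_def card_insert_le_m1 card_insert_if)
  show "\<not> can_park n (occupied n s k) (s ! k) \<Longrightarrow> occupied n s (Suc k) = occupied n s k"
    using occupied_Suc[OF assms] by (simp add: park_step_def)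
  assume cp: "can_park n (occupied n s k) (s ! k)" and f: "finite (occupied n s k)"
  show "card (occupied n s (Suc k)) = Suc (card (occupied n s k))"
    using occupied_Suc[OF assms] park_least(1)[OF cp] cp f by (simp add: park_step_def)
qed

lemma pf_char:
  "parking_functions n = {s. length s = n \<and> (\<forall>a\<in>set s. 1 \<le> a \<and> a \<le> n) \<and> (\<forall>i\<in>{1..n}. i \<le> cnt s i)}"
proof (intro set_eqI iffI)
  fix s assume "s \<in> parking_functions n"
  then have len: "length s = n" and vals: "\<forall>a\<in>set s. 1 \<le> a \<and> a \<le> n"
    and cp: "\<forall>k<n. can_park n (occupied n s k) (s ! k)" unfolding parking_functions_def by auto
  have inv: "\<And>k. k \<le> n \<Longrightarrow> occupied n s k \<subseteq> {1..n} \<and> card (occupied n s k) \<le> k \<and>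
         (\<forall>i. card (occupied n s k \<inter> {1..i}) \<le> cnt (take k s) i)"
    using park_invariants[of s] vals len by auto
  have ck: "k \<le> n \<Longrightarrow> card (occupied n s k) = k" for k
  proof (induction k)
    case 0 then show ?case by simp
  next
    case (Suc k)
    have "finite (occupied n s k)" using inv[of k] Suc.prems finite_subset by auto
    then show ?case using occ_card_step(3)[of k s n] cp Suc len by auto
  qed
  have "occupied n s n = {1..n}"
    using inv[of n] ck[of n] by (intro card_subset_eq) auto
  then have "\<forall>i. card ({1..n} \<inter> {1..i}) \<le> cnt s i" using inv[of n] len by auto
  then have "\<forall>i\<in>{1..n}. i \<le> cnt s i"
  proof (intro ballI)
    fix i assume i: "i \<in> {1..n}"
    then have "{1..n} \<inter> {1..i} = {1..i}" by auto
    then show "i \<le> cnt s i" using \<open>\<forall>i. card ({1..n} \<inter> {1..i}) \<le> cnt s i\<close>[rule_format, of i] i by simp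
  qed
  then show "s \<in> {s. length s = n \<and> (\<forall>a\<in>set s. 1 \<le> a \<and> a \<le> n) \<and> (\<forall>i\<in>{1..n}. i \<le> cnt s i)}"
    using len vals by auto
next
  fix s assume "s \<in> {s. length s = n \<and> (\<forall>a\<in>set s. 1 \<le> a \<and> a \<le> n) \<and> (\<forall>i\<in>{1..n}. i \<le> cnt s i)}"
  then have len: "length s = n" and vals: "\<forall>a\<in>set s. 1 \<le> a \<and> a \<le> n"
    and C: "\<forall>i\<in>{1..n}. i \<le> cnt s i" by auto
  have inv: "\<And>k. k \<le> n \<Longrightarrow> occupied n s k \<subseteq> {1..n} \<and> card (occupied n s k) \<le> k \<and>
         (\<forall>q\<in>{1..n}. q \<notin> occupied n s k \<longrightarrow> cnt (take k s) q \<le> card (occupied n s k \<inter> {1..<q}))"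
    using park_invariants[of s] vals len by auto
  have "\<forall>k<n. can_park n (occupied n s k) (s ! k)"
  proof (rule ccontr)
    assume "\<not> ?thesis"
    then obtain k where k: "k < n" "\<not> can_park n (occupied n s k) (s ! k)" by auto
    have c1: "card (occupied n s (Suc k)) \<le> k"
      using occ_card_step(2)[of k s n] k inv[of k] len by auto
    have "m \<ge> Suc k \<Longrightarrow> m \<le> n \<Longrightarrow> card (occupied n s m) \<le> m - 1" for m
    proof (induction m rule: dec_induct)
      case base then show ?case using c1 by simp
    next
      case (step m)
      then show ?case using occ_card_step(1)[of m s n] len by auto
    qed
    from this[of n] have "card (occupied n s n) < n" using k by simp
    then have "\<not> {1..n} \<subseteq> occupied n s n"
    proof (intro notI)
      assume "{1..n} \<subseteq> occupied n s n"
      then have "card {1..n} \<le> card (occupied n s n)"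
        using inv[of n] by (intro card_mono) (auto intro: finite_subset)
      then show False using \<open>card (occupied n s n) < n\<close> by simp
    qed
    then obtain q where q: "q \<in> {1..n}" "q \<notin> occupied n s n" by blast
    have "cnt s q \<le> card (occupied n s n \<inter> {1..<q})" using inv[of n] q len by auto
    also have "\<dots> \<le> card {1..<q}" by (rule card_mono) auto
    also have "\<dots> < q" using q by simp
    moreover have "q \<le> cnt s q" using C q by blast
    ultimately show False by linarith
  qed
  then show "s \<in> parking_functions n" using len vals unfolding parking_functions_def by auto
qed

lemma cluster_static:
  assumes vals: "\<forall>a\<in>set s. 1 \<le> a" and k: "k \<le> length s" "k \<le> n"
  shows "init_cluster (occupied n s k) = cl (take k s)"
proof -
  have inv: "occupied n s k \<subseteq> {1..n} \<and>
         (\<forall>i. card (occupied n s k \<inter> {1..i}) \<le> cnt (take k s) i) \<and>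
         (\<forall>q\<in>{1..n}. q \<notin> occupied n s k \<longrightarrow> cnt (take k s) q \<le> card (occupied n s k \<inter> {1..<q}))"
    using park_invariants[OF vals k(1)] by auto
  have eq: "({1..m} \<subseteq> occupied n s k) = good m (take k s)" for m
  proof
    assume "{1..m} \<subseteq> occupied n s k"
    then show "good m (take k s)" unfolding good_def
    proof (intro ballI)
      fix i assume "{1..m} \<subseteq> occupied n s k" "i \<in> {1..m}"
      then have "occupied n s k \<inter> {1..i} = {1..i}" by auto
      then show "i \<le> cnt (take k s) i" using inv[THEN conjunct2, THEN conjunct1, rule_format, of i] by simp
    qed
  next
    assume g: "good m (take k s)"
    have "m \<le> n" using good_le[OF g] k by simp
    show "{1..m} \<subseteq> occupied n s k"
    proof
      fix q assume q: "q \<in> {1..m}"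
      show "q \<in> occupied n s k"
      proof (rule ccontr)
        assume "q \<notin> occupied n s k"
        then have "cnt (take k s) q \<le> card (occupied n s k \<inter> {1..<q})" using inv q \<open>m \<le> n\<close> by auto
        also have "\<dots> \<le> card {1..<q}" by (rule card_mono) auto
        also have "\<dots> < q" using q by simp
        moreover have "q \<le> cnt (take k s) q" using g q unfolding good_def by blast
        ultimately show False by linarith
      qed
    qed
  qed
  show ?thesis unfolding init_cluster_def cl_def eq ..
qed



definition incs :: "nat list \<Rightarrow> nat multiset" where
  "incs t = mset (filter (\<lambda>d. d \<noteq> 0) (map (\<lambda>k. cl (take k t) - cl (take (k-1) t)) [1..<Suc (length t)]))"

lemma incs_Nil[simp]: "incs [] = {#}" by (simp add: incs_def)

lemma incs_snoc:
  "incs (t @ [a]) = incs t + (if cl (t @ [a]) - cl t = 0 then {#} else {#cl (t @ [a]) - cl t#})"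
proof -
  have up: "[1..<Suc (length (t @ [a]))] = [1..<Suc (length t)] @ [Suc (length t)]" by simp
  have m: "map (\<lambda>k. cl (take k (t @ [a])) - cl (take (k-1) (t @ [a]))) [1..<Suc (length t)]
        = map (\<lambda>k. cl (take k t) - cl (take (k-1) t)) [1..<Suc (length t)]"
    by (rule map_cong) auto
  show ?thesis unfolding incs_def up map_append m by simp
qed

lemma cnt_Suc_notin: "Suc c \<in> set t \<Longrightarrow> cnt t c < cnt t (Suc c)"
proof (induction t)
  case Nil then show ?case by simp
next
  case (Cons a t)
  have "cnt t c \<le> cnt t (Suc c)" by (rule cnt_mono) simp
  then show ?case using Cons by (auto simp: cnt_Cons)
qed

lemma cnt_filter_split: "cnt t i = cnt (filter P t) i + cnt (filter (\<lambda>a. \<not> P a) t) i"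
  by (induction t) (auto simp: cnt_Cons)

lemma cnt_filter_le: "i \<le> c \<Longrightarrow> cnt (filter (\<lambda>a. \<not> c < a) t) i = cnt t i"
  by (induction t) (auto simp: cnt_Cons)

lemma cnt_filter_ge: "c \<le> i \<Longrightarrow> cnt (filter (\<lambda>a. \<not> c < a) t) i = cnt t c"
  by (induction t) (auto simp: cnt_Cons)

lemma cnt_shift_down:
  "cnt (map (\<lambda>a. a - Suc c) (filter (\<lambda>a. c < a) t)) i + cnt t c = cnt t (i + Suc c)"
  by (induction t) (auto simp: cnt_Cons)

lemma cnt_shift_up:
  "cnt (map (\<lambda>a. a + Suc c) u) i = (if i < Suc c then 0 else cnt u (i - Suc c))"
  by (induction u) (auto simp: cnt_Cons)

lemma cnt_vals0: "\<forall>a\<in>set t. 1 \<le> a \<Longrightarrow> cnt t 0 = 0"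
  by (induction t) (auto simp: cnt_Cons)

lemma cl_filter:
  assumes "Suc c \<notin> set u" "cnt u c \<le> c"
  shows "cl u = cl (filter (\<lambda>a. \<not> c < a) u)"
proof -
  let ?f = "filter (\<lambda>a. \<not> c < a) u"
  have "good m u = good m ?f" for m
  proof (cases "m \<le> c")
    case True
    then show ?thesis unfolding good_def using cnt_filter_le[of _ c u] by auto
  next
    case False
    have e: "cnt u (Suc c) = cnt u c" using assms(1) by (induction u) (auto simp: cnt_Cons)
    have "\<not> good m u"
    proof
      assume "good m u"
      then have "Suc c \<le> cnt u (Suc c)" using False unfolding good_def by auto
      then show False using e assms(2) by simp
    qed
    moreover have "\<not> good m ?f"
    proof
      assume "good m ?f"
      then have "Suc c \<le> cnt ?f (Suc c)" using False unfolding good_def by auto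
      then show False using cnt_filter_ge[of c "Suc c" u] assms(2) by simp
    qed
    ultimately show ?thesis by simp
  qed
  then show ?thesis unfolding cl_def by simp
qed

lemma incs_filter:
  assumes "Suc c \<notin> set t" "cnt t c \<le> c"
  shows "incs t = incs (filter (\<lambda>a. \<not> c < a) t)"
  using assms
proof (induction t rule: rev_induct)
  case Nil then show ?case by simp
next
  case (snoc a t)
  have h: "Suc c \<notin> set t" "cnt t c \<le> c" using snoc.prems by auto
  note IH = snoc.IH[OF h]
  have c1: "cl (t @ [a]) = cl (filter (\<lambda>a. \<not> c < a) (t @ [a]))" by (rule cl_filter) (use snoc.prems in auto)
  have c2: "cl t = cl (filter (\<lambda>a. \<not> c < a) t)" by (rule cl_filter[OF h])
  show ?case
  proof (cases "c < a")
    case True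
    then show ?thesis using IH c1 c2 by (simp add: incs_snoc)
  next
    case False
    then show ?thesis using IH c1 c2 by (simp add: incs_snoc)
  qed
qed



fun merge :: "bool list \<Rightarrow> 'a list \<Rightarrow> 'a list \<Rightarrow> 'a list" where
  "merge [] xs ys = []"
| "merge (b # bs) xs ys = (if b then hd ys # merge bs xs (tl ys) else hd xs # merge bs (tl xs) ys)"

lemma merge_split: "merge (map P t) (filter (\<lambda>a. \<not> P a) t) (filter P t) = t"
  by (induction t) auto

lemma merge_props:
  assumes "length xs = length (filter Not bs)" "length ys = length (filter id bs)"
    "\<forall>y\<in>set ys. P y" "\<forall>x\<in>set xs. \<not> P x"
  shows "map P (merge bs xs ys) = bs \<and> filter P (merge bs xs ys) = ys \<and>
         filter (\<lambda>a. \<not> P a) (merge bs xs ys) = xs"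
  using assms
proof (induction bs arbitrary: xs ys)
  case Nil then show ?case by simp
next
  case (Cons b bs)
  show ?case
  proof (cases b)
    case True
    then obtain y ys' where ys: "ys = y # ys'" using Cons.prems by (cases ys) auto
    then show ?thesis using Cons.IH[of xs ys'] Cons.prems True by auto
  next
    case False
    then obtain x xs' where xs: "xs = x # xs'" using Cons.prems by (cases xs) auto
    then show ?thesis using Cons.IH[of xs' ys] Cons.prems False by auto
  qed
qed

lemma pfD:
  assumes "s \<in> parking_functions n"
  shows "length s = n" "\<And>a. a \<in> set s \<Longrightarrow> 1 \<le> a" "\<And>a. a \<in> set s \<Longrightarrow> a \<le> n"
    "\<And>i. 1 \<le> i \<Longrightarrow> i \<le> n \<Longrightarrow> i \<le> cnt s i"
  using assms unfolding pf_char by auto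

lemma pfI:
  assumes "length s = n" "\<And>a. a \<in> set s \<Longrightarrow> 1 \<le> a \<and> a \<le> n"
    "\<And>i. 1 \<le> i \<Longrightarrow> i \<le> n \<Longrightarrow> i \<le> cnt s i"
  shows "s \<in> parking_functions n"
  using assms unfolding pf_char by auto

lemma pf_good:
  assumes pf: "s \<in> parking_functions n" shows "cl s = n"
proof (rule cl_eqI)
  show "good n s" unfolding good_def using pfD(4)[OF pf] by auto
  fix m assume "good m s" then show "m \<le> n" using good_le pfD(1)[OF pf] by metis
qed

lemma pf_fwd:
  assumes pf: "s \<in> parking_functions n" and n: "1 \<le> n"
  defines "t \<equiv> butlast s" and "c \<equiv> cl (butlast s)" and "x \<equiv> last s"
  shows "s = t @ [x]" "length t = n - 1" "c < n" "Suc c \<notin> set t" "cnt t c = c" "1 \<le> x" "x \<le> Suc c"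
    "filter (\<lambda>a. \<not> c < a) t \<in> parking_functions c"
    "map (\<lambda>a. a - Suc c) (filter (\<lambda>a. c < a) t) \<in> parking_functions (n - 1 - c)"
    "length (filter id (map (\<lambda>a. c < a) t)) = n - 1 - c"
    "incs s = incs (filter (\<lambda>a. \<not> c < a) t) + {#n - c#}"
proof -
  have len: "length s = n" using pfD[OF pf] by simp
  then have ne: "s \<noteq> []" using n by auto
  show st: "s = t @ [x]" unfolding t_def x_def using ne by simp
  show lt: "length t = n - 1" unfolding t_def using len by simp
  have vals: "\<And>a. a \<in> set t \<Longrightarrow> 1 \<le> a \<and> a \<le> n" using pfD[OF pf] st by (metis Un_iff set_append)
  have xv: "1 \<le> x \<and> x \<le> n" using pfD[OF pf] st by (metis last_in_set ne x_def)
  then show "1 \<le> x" by simp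
  have gc: "good c t" unfolding c_def t_def by (rule cl_good)
  have ngc: "\<not> good (Suc c) t" using cl_max[of "Suc c" t] unfolding c_def t_def by auto
  have c_le: "c \<le> cnt t c"
  proof (cases "c = 0")
    case False then show ?thesis using gc unfolding good_def by auto
  qed simp
  have "\<not> Suc c \<le> cnt t (Suc c)"
  proof
    assume "Suc c \<le> cnt t (Suc c)"
    then have "good (Suc c) t" using gc unfolding good_def by (auto simp: le_Suc_eq)
    then show False using ngc by simp
  qed
  then have cs: "cnt t (Suc c) \<le> c" by simp
  moreover have "cnt t c \<le> cnt t (Suc c)" by (rule cnt_mono) simp
  ultimately show cc: "cnt t c = c" using c_le by simp
  show nin: "Suc c \<notin> set t" using cnt_Suc_notin[of c t] cs cc by auto
  have ccs: "cnt t (Suc c) = c" using cs cc \<open>cnt t c \<le> cnt t (Suc c)\<close> by simp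
  show cn: "c < n" using c_le cnt_le_length[of t c] lt n by simp
  have "Suc c \<le> cnt s (Suc c)" using pfD(4)[OF pf, of "Suc c"] cn by simp
  then show xc: "x \<le> Suc c" using ccs st by (auto simp: cnt_def split: if_splits)
  let ?t1 = "filter (\<lambda>a. \<not> c < a) t"
  have l1: "length ?t1 = c" using cc by (simp add: cnt_def not_less)
  show "?t1 \<in> parking_functions c"
  proof (rule pfI)
    show "length ?t1 = c" by (rule l1)
    show "\<And>a. a \<in> set ?t1 \<Longrightarrow> 1 \<le> a \<and> a \<le> c" using vals by auto
    fix i assume "1 \<le> i" "i \<le> c"
    then show "i \<le> cnt ?t1 i" using gc cnt_filter_le[of i c t] unfolding good_def by auto
  qed
  let ?t2 = "map (\<lambda>a. a - Suc c) (filter (\<lambda>a. c < a) t)"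
  have l2: "length (filter (\<lambda>a. c < a) t) = n - 1 - c"
    using sum_length_filter_compl[of "\<lambda>a. \<not> c < a" t] l1 lt by simp
  show "length (filter id (map (\<lambda>a. c < a) t)) = n - 1 - c"
    using l2 by (simp add: filter_map comp_def)
  show "?t2 \<in> parking_functions (n - 1 - c)"
  proof (rule pfI)
    show "length ?t2 = n - 1 - c" using l2 by simp
    fix a assume "a \<in> set ?t2"
    then obtain b where b: "b \<in> set t" "c < b" "a = b - Suc c" by auto
    then have "b \<noteq> Suc c" using nin by auto
    then show "1 \<le> a \<and> a \<le> n - 1 - c" using b vals[of b] by auto
  next
    fix i assume i: "1 \<le> i" "i \<le> n - 1 - c"
    have "i + Suc c \<le> cnt s (i + Suc c)" using pfD(4)[OF pf, of "i + Suc c"] i by simp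
    also have "\<dots> \<le> cnt t (i + Suc c) + 1" using st by (simp add: cnt_def)
    finally show "i \<le> cnt ?t2 i" using cnt_shift_down[of c t i] cc by simp
  qed
  have "incs s = incs t + {#n - c#}"
  proof -
    have "cl s = n" by (rule pf_good[OF pf])
    then show ?thesis using st incs_snoc[of t x] cn unfolding c_def t_def by auto
  qed
  also have "incs t = incs ?t1" using incs_filter[OF nin] cc by simp
  finally show "incs s = incs ?t1 + {#n - c#}" .
qed

lemma cnt_all: "\<forall>a\<in>set u. a \<le> i \<Longrightarrow> cnt u i = length u"
  by (simp add: cnt_def)

lemma pf_bwd:
  assumes n: "1 \<le> n" and bs: "length bs = n - 1"
    and t1: "t1 \<in> parking_functions (n - 1 - length (filter id bs))"
    and t2: "t2 \<in> parking_functions (length (filter id bs))"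
    and x: "1 \<le> x" "x \<le> Suc (n - 1 - length (filter id bs))"
  defines "c \<equiv> n - 1 - length (filter id bs)"
  defines "t \<equiv> merge bs t1 (map (\<lambda>a. a + Suc c) t2)"
  shows "t @ [x] \<in> parking_functions n" "cl t = c" "map (\<lambda>a. c < a) t = bs"
    "filter (\<lambda>a. \<not> c < a) t = t1" "map (\<lambda>a. a - Suc c) (filter (\<lambda>a. c < a) t) = t2"
    "incs (t @ [x]) = incs t1 + {#n - c#}"
proof -
  let ?k = "length (filter id bs)"
  let ?t2 = "map (\<lambda>a. a + Suc c) t2"
  have kle: "?k \<le> n - 1" using bs length_filter_le[of id bs] by simp
  have cdef: "c = n - 1 - ?k" unfolding c_def by simp
  have l1: "length t1 = c" using pfD(1)[OF t1] c_def by simp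
  have lnot: "length (filter Not bs) = c" using sum_length_filter_compl[of id bs] bs c_def kle
    by (simp add: comp_def)
  have l2: "length t2 = ?k" using pfD(1)[OF t2] by simp
  have "\<forall>a\<in>set t1. a \<le> c" using pfD(3)[OF t1] unfolding c_def by blast
  then have v1: "\<forall>a\<in>set t1. \<not> c < a" by (simp add: not_less)
  have v1': "\<forall>a\<in>set t1. 1 \<le> a" using pfD(2)[OF t1] by auto
  have v2: "\<forall>a\<in>set ?t2. c < a" by auto
  have MP: "map (\<lambda>a. c < a) t = bs \<and> filter (\<lambda>a. c < a) t = ?t2 \<and> filter (\<lambda>a. \<not> c < a) t = t1"
    unfolding t_def by (rule merge_props) (use l1 lnot l2 v1 v2 in auto)
  then show "map (\<lambda>a. c < a) t = bs" "filter (\<lambda>a. \<not> c < a) t = t1" by auto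
  show "map (\<lambda>a. a - Suc c) (filter (\<lambda>a. c < a) t) = t2" using MP by (simp add: comp_def)
  have cntt: "cnt t i = cnt ?t2 i + cnt t1 i" for i
    using cnt_filter_split[of t i "\<lambda>a. c < a"] MP by simp
  have c1: "c \<le> i \<Longrightarrow> cnt t1 i = c" for i
  proof -
    assume "c \<le> i"
    then have "\<forall>a\<in>set t1. a \<le> i" using v1 by force
    then show ?thesis using cnt_all[of t1 i] l1 by simp
  qed
  have lt: "length t = n - 1" using MP bs by (metis length_map)
  have sett: "set t = set t1 \<union> set ?t2"
  proof -
    have "set t = set (filter (\<lambda>a. \<not> c < a) t) \<union> set (filter (\<lambda>a. c < a) t)" by auto
    then show ?thesis using MP by simp
  qed
  show pf: "t @ [x] \<in> parking_functions n"
  proof (rule pfI)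
    show "length (t @ [x]) = n" using lt n by simp
    fix a assume a: "a \<in> set (t @ [x])"
    show "1 \<le> a \<and> a \<le> n"
    proof -
      have "a \<in> set t1 \<or> a \<in> set ?t2 \<or> a = x" using a sett by auto
      moreover have "a \<in> set t1 \<Longrightarrow> ?thesis"
      proof -
        assume a1: "a \<in> set t1"
        then have "1 \<le> a" "a \<le> c" using pfD(2,3)[OF t1] unfolding c_def by auto
        then show ?thesis using cdef by linarith
      qed
      moreover have "a \<in> set ?t2 \<Longrightarrow> ?thesis"
      proof -
        assume "a \<in> set ?t2"
        then obtain b where b: "b \<in> set t2" "a = b + Suc c" by auto
        then have "1 \<le> b" "b \<le> ?k" using pfD(2,3)[OF t2] by auto
        then show ?thesis using b cdef kle by linarith
      qed
      moreover have "a = x \<Longrightarrow> ?thesis" using x c_def kle n by simp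
      ultimately show ?thesis by blast
    qed
  next
    fix i assume i: "1 \<le> i" "i \<le> n"
    have e: "cnt (t @ [x]) i = cnt t i + (if x \<le> i then 1 else 0)" by (simp add: cnt_def)
    show "i \<le> cnt (t @ [x]) i"
    proof (cases "i \<le> c")
      case True
      have "i \<le> cnt t1 i" using pfD(4)[OF t1 i(1)] True unfolding c_def by blast
      then show ?thesis using cntt[of i] e by simp
    next
      case False
      define i' where "i' = i - Suc c"
      have i': "i = i' + Suc c" using False i'_def by simp
      have xi: "x \<le> i" using x False unfolding c_def by simp
      have ci: "cnt t1 i = c" using c1[of i] False by simp
      have cu: "cnt ?t2 i = cnt t2 i'" using cnt_shift_up[of c t2 i] i' by simp
      have "i' \<le> cnt t2 i'"
      proof (cases "i' = 0")
        case False
        have "i' \<le> ?k" using i i' cdef kle by linarith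
        then show ?thesis using pfD(4)[OF t2, of i'] False by simp
      qed simp
      then show ?thesis using e cntt[of i] ci cu xi i' by simp
    qed
  qed
  show "cl t = c"
  proof (rule cl_eqI)
    show "good c t" unfolding good_def
    proof
      fix i assume "i \<in> {1..c}"
      then have "i \<le> cnt t1 i" using pfD(4)[OF t1] unfolding c_def by auto
      then show "i \<le> cnt t i" using cntt[of i] by simp
    qed
    fix m assume g: "good m t"
    show "m \<le> c"
    proof (rule ccontr)
      assume "\<not> m \<le> c"
      then have "Suc c \<le> cnt t (Suc c)" using g unfolding good_def by auto
      moreover have "cnt t2 0 = 0" using cnt_vals0[of t2] pfD(2)[OF t2] by blast
      ultimately show False using cntt[of "Suc c"] c1[of "Suc c"] cnt_shift_up[of c t2 "Suc c"] by simp
    qed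
  qed
  then show "incs (t @ [x]) = incs t1 + {#n - c#}"
    using pf_fwd(11)[OF pf n] MP by simp
qed

lemma map_shift_cancel: "map (\<lambda>a. a + Suc c) (map (\<lambda>a. a - Suc c) (filter (\<lambda>a. c < a) u)) = filter (\<lambda>a. c < a) u"
  by (induction u) auto

definition DP :: "nat \<Rightarrow> nat multiset \<Rightarrow> (bool list \<times> nat list \<times> nat list \<times> nat) set" where
  "DP n M = (SIGMA bs:{bs. length bs = n - 1}.
     {t1 \<in> parking_functions (n - 1 - length (filter id bs)). incs t1 + {#n - (n - 1 - length (filter id bs))#} = M}
     \<times> parking_functions (length (filter id bs)) \<times> {1..Suc (n - 1 - length (filter id bs))})"

definition fwdP :: "nat list \<Rightarrow> bool list \<times> nat list \<times> nat list \<times> nat" where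
  "fwdP s = (let t = butlast s; c = cl t in
     (map (\<lambda>a. c < a) t, filter (\<lambda>a. \<not> c < a) t, map (\<lambda>a. a - Suc c) (filter (\<lambda>a. c < a) t), last s))"

definition bwdP :: "nat \<Rightarrow> bool list \<times> nat list \<times> nat list \<times> nat \<Rightarrow> nat list" where
  "bwdP n = (\<lambda>(bs, t1, t2, x). merge bs t1 (map (\<lambda>a. a + Suc (n - 1 - length (filter id bs))) t2) @ [x])"

lemma pf_bij:
  assumes n: "1 \<le> n"
  shows "bij_betw fwdP {s \<in> parking_functions n. incs s = M} (DP n M)"
proof (rule bij_betw_byWitness[where f' = "bwdP n"])
  show "\<forall>s\<in>{s \<in> parking_functions n. incs s = M}. bwdP n (fwdP s) = s"
  proof
    fix s assume "s \<in> {s \<in> parking_functions n. incs s = M}"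
    then have pf: "s \<in> parking_functions n" by simp
    let ?t = "butlast s" let ?c = "cl (butlast s)"
    note F = pf_fwd[OF pf n]
    have k: "n - 1 - length (filter id (map (\<lambda>a. ?c < a) ?t)) = ?c" using F(3,10) by simp
    have m: "map (\<lambda>a. a + Suc ?c) (map (\<lambda>a. a - Suc ?c) (filter (\<lambda>a. ?c < a) ?t)) = filter (\<lambda>a. ?c < a) ?t"
      by (rule map_shift_cancel)
    show "bwdP n (fwdP s) = s"
      unfolding fwdP_def bwdP_def Let_def using k m merge_split[of "\<lambda>a. ?c < a" ?t] F(1) by simp
  qed
next
  show "\<forall>y\<in>DP n M. fwdP (bwdP n y) = y"
  proof
    fix y assume "y \<in> DP n M"
    then obtain bs t1 t2 x where y: "y = (bs, t1, t2, x)" and bs: "length bs = n - 1"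
      and t1: "t1 \<in> parking_functions (n - 1 - length (filter id bs))"
      and t2: "t2 \<in> parking_functions (length (filter id bs))"
      and x: "1 \<le> x" "x \<le> Suc (n - 1 - length (filter id bs))"
      unfolding DP_def by auto
    note B = pf_bwd[OF n bs t1 t2 x]
    show "fwdP (bwdP n y) = y" unfolding y fwdP_def bwdP_def Let_def using B by simp
  qed
next
  show "fwdP ` {s \<in> parking_functions n. incs s = M} \<subseteq> DP n M"
  proof
    fix y assume "y \<in> fwdP ` {s \<in> parking_functions n. incs s = M}"
    then obtain s where pf: "s \<in> parking_functions n" and M: "incs s = M" and y: "y = fwdP s" by auto
    let ?t = "butlast s" let ?c = "cl (butlast s)"
    note F = pf_fwd[OF pf n]
    have k: "n - 1 - length (filter id (map (\<lambda>a. ?c < a) ?t)) = ?c" using F(3,10) by simp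
    have k2: "length (filter id (map (\<lambda>a. ?c < a) ?t)) = n - 1 - ?c" using F(10) by simp
    show "y \<in> DP n M" unfolding y fwdP_def Let_def DP_def
      using F(2) F(6,7) F(8) F(9) F(11) M k k2 by (simp add: F(2))
  qed
next
  show "bwdP n ` DP n M \<subseteq> {s \<in> parking_functions n. incs s = M}"
  proof
    fix s assume "s \<in> bwdP n ` DP n M"
    then obtain bs t1 t2 x where s: "s = bwdP n (bs, t1, t2, x)" and bs: "length bs = n - 1"
      and t1: "t1 \<in> parking_functions (n - 1 - length (filter id bs))"
      and t2: "t2 \<in> parking_functions (length (filter id bs))"
      and x: "1 \<le> x" "x \<le> Suc (n - 1 - length (filter id bs))"
      and M: "incs t1 + {#n - (n - 1 - length (filter id bs))#} = M"
      unfolding DP_def by auto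
    note B = pf_bwd[OF n bs t1 t2 x]
    show "s \<in> {s \<in> parking_functions n. incs s = M}" using B M unfolding s bwdP_def by simp
  qed
qed



definition forest_on :: "nat set \<Rightarrow> (nat \<Rightarrow> nat) set" where
  "forest_on V = {par. (\<forall>v. v \<notin> V \<longrightarrow> par v = 0) \<and> (\<forall>v\<in>V. par v = 0 \<or> par v \<in> V) \<and>
                       (\<forall>v\<in>V. \<exists>k. (par ^^ k) v = 0)}"

definition mr :: "nat set \<Rightarrow> (nat \<Rightarrow> nat) \<Rightarrow> nat set" where
  "mr V par = {v \<in> V. \<forall>a \<in> ancestors par v. a \<le> v}"

definition sub :: "nat set \<Rightarrow> (nat \<Rightarrow> nat) \<Rightarrow> nat \<Rightarrow> nat set" where
  "sub V par r = {w \<in> V. \<exists>k. (par ^^ k) w = r \<and> (\<forall>i<k. (par ^^ i) w \<notin> mr V par)}"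

definition fstat :: "nat set \<Rightarrow> (nat \<Rightarrow> nat) \<Rightarrow> nat multiset" where
  "fstat V par = image_mset (\<lambda>r. card (sub V par r)) (mset_set (mr V par))"

lemma funpow_agree:
  assumes A: "\<forall>w\<in>S. f w = g w \<and> f w \<in> S" and w: "w \<in> S"
  shows "(f ^^ k) w = (g ^^ k) w \<and> (f ^^ k) w \<in> S"
proof (induction k)
  case 0 then show ?case using w by simp
next
  case (Suc k)
  then have "(g ^^ k) w \<in> S" by metis
  then show ?case using A Suc by (metis funpow.simps(2) comp_apply)
qed

lemma forestD:
  assumes "par \<in> forest_on V"
  shows "\<And>v. v \<notin> V \<Longrightarrow> par v = 0" "\<And>v. v \<in> V \<Longrightarrow> par v \<in> insert 0 V"
    "\<And>v. v \<in> V \<Longrightarrow> \<exists>k. (par ^^ k) v = 0"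
  using assms unfolding forest_on_def by auto

lemma forestI:
  assumes "\<And>v. v \<notin> V \<Longrightarrow> par v = 0" "\<And>v. v \<in> V \<Longrightarrow> par v \<in> insert 0 V"
    "\<And>v. v \<in> V \<Longrightarrow> \<exists>k. (par ^^ k) v = 0"
  shows "par \<in> forest_on V"
  using assms unfolding forest_on_def by auto

lemma funpow_zero: "(par::nat\<Rightarrow>nat) 0 = 0 \<Longrightarrow> (par ^^ k) 0 = 0"
  by (induction k) auto

lemma funpow_zero_mono:
  fixes par :: "nat \<Rightarrow> nat"
  assumes "par 0 = 0" "(par ^^ k) w = 0" "k \<le> k'"
  shows "(par ^^ k') w = 0"
proof -
  have "k' = (k' - k) + k" using assms(3) by simp
  then have "(par ^^ k') w = (par ^^ (k' - k)) ((par ^^ k) w)"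
    by (metis funpow_add comp_apply)
  then show ?thesis using assms funpow_zero by simp
qed

context
  fixes V par
  assumes z: "0 \<notin> V" and F: "par \<in> forest_on V"
begin

lemma par0: "par 0 = 0" using forestD(1)[OF F] z by simp

lemma path_in: "w \<in> insert 0 V \<Longrightarrow> (par ^^ k) w \<in> insert 0 V"
  using funpow_agree[of "insert 0 V" par par w k] forestD(2)[OF F] par0 by auto

lemma acyclic:
  assumes w: "w \<in> V" and k: "k \<ge> 1" and eq: "(par ^^ k) w = w"
  shows False
proof -
  have m: "(par ^^ (k * m)) w = w" for m
  proof (induction m)
    case 0 then show ?case by simp
  next
    case (Suc m)
    have "(par ^^ (k * Suc m)) w = (par ^^ k) ((par ^^ (k * m)) w)"
      by (simp add: funpow_add)
    then show ?case using Suc eq by simp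
  qed
  obtain K where K: "(par ^^ K) w = 0" using forestD(3)[OF F w] by blast
  have "(par ^^ (k * K)) w = 0" using funpow_zero_mono[OF par0 K] k by simp
  then show False using m[of K] w z by simp
qed

lemma ancestors_sub: "w \<in> V \<Longrightarrow> ancestors par w \<subseteq> V"
proof
  fix a assume w: "w \<in> V" and "a \<in> ancestors par w"
  then obtain k where "a = (par ^^ k) w" "a \<noteq> 0" unfolding ancestors_def by auto
  then show "a \<in> V" using path_in[of w k] w by auto
qed

end


definition Tset :: "nat set \<Rightarrow> (nat \<Rightarrow> nat) \<Rightarrow> nat set" where
  "Tset V par = {w \<in> V. \<exists>k. (par ^^ k) w = Max V}"

definition Hof :: "nat set \<Rightarrow> (nat \<Rightarrow> nat) \<Rightarrow> nat \<Rightarrow> nat" where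
  "Hof V par = (\<lambda>w. if w \<in> V - Tset V par then par w else 0)"

definition Gof :: "nat set \<Rightarrow> (nat \<Rightarrow> nat) \<Rightarrow> nat \<Rightarrow> nat" where
  "Gof V par = (\<lambda>w. if w \<in> Tset V par - {Max V} then (if par w = Max V then 0 else par w) else 0)"

context
  fixes V par
  assumes z: "0 \<notin> V" and F: "par \<in> forest_on V" and fin: "finite V" and ne: "V \<noteq> {}"
begin

abbreviation "v \<equiv> Max V"
abbreviation "T \<equiv> Tset V par"
abbreviation "R \<equiv> V - Tset V par"

lemma vV: "v \<in> V" using fin ne by simp
lemma v0: "v \<noteq> 0" using vV z by (metis)
lemma vT: "v \<in> T" unfolding Tset_def using vV by (auto intro: exI[of _ 0])
lemma TV: "T \<subseteq> V" unfolding Tset_def by auto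

lemma par_R: "w \<in> R \<Longrightarrow> par w \<in> insert 0 R"
proof -
  assume w: "w \<in> R"
  have "par w \<in> insert 0 V" using forestD(2)[OF F] w by auto
  moreover have "par w \<notin> T"
  proof
    assume "par w \<in> T"
    then obtain k where "(par ^^ k) (par w) = v" unfolding Tset_def by auto
    then have "(par ^^ Suc k) w = v" by (simp add: funpow_Suc_right del: funpow.simps)
    then show False using w unfolding Tset_def by blast
  qed
  ultimately show ?thesis by auto
qed

lemma par_T: "w \<in> T \<Longrightarrow> w \<noteq> v \<Longrightarrow> par w \<in> T"
proof -
  assume w: "w \<in> T" "w \<noteq> v"
  then obtain k where k: "(par ^^ k) w = v" unfolding Tset_def by auto
  then obtain k' where k': "k = Suc k'" using w(2) by (cases k) auto
  have pk: "(par ^^ k') (par w) = v" using k k' by (simp add: funpow_Suc_right del: funpow.simps)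
  have "par w \<in> insert 0 V" using forestD(2)[OF F] w TV by auto
  moreover have "par w \<noteq> 0" using pk funpow_zero[of par, OF par0[OF z F]] v0 by metis
  ultimately show ?thesis using pk unfolding Tset_def by auto
qed

lemma par_v: "par v \<in> insert 0 R"
proof -
  have "par v \<in> insert 0 V" using forestD(2)[OF F] vV by auto
  moreover have "par v \<notin> T"
  proof
    assume "par v \<in> T"
    then obtain k where "(par ^^ k) (par v) = v" unfolding Tset_def by auto
    moreover have "(par ^^ Suc k) v = (par ^^ k) (par v)" by (simp only: funpow_Suc_right comp_apply)
    ultimately show False using acyclic[OF z F vV, of "Suc k"] by simp
  qed
  ultimately show ?thesis by auto
qed

lemma H_agree: "w \<in> insert 0 R \<Longrightarrow> (par ^^ k) w = (Hof V par ^^ k) w \<and> (par ^^ k) w \<in> insert 0 R"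
  by (rule funpow_agree) (use par_R par0[OF z F] in \<open>auto simp: Hof_def\<close>)

lemma H_forest: "Hof V par \<in> forest_on R"
proof (rule forestI)
  show "\<And>w. w \<notin> R \<Longrightarrow> Hof V par w = 0" by (auto simp: Hof_def)
  show "\<And>w. w \<in> R \<Longrightarrow> Hof V par w \<in> insert 0 R" using par_R by (simp add: Hof_def)
  fix w assume w: "w \<in> R"
  obtain k where "(par ^^ k) w = 0" using forestD(3)[OF F] w by blast
  then show "\<exists>k. (Hof V par ^^ k) w = 0" using H_agree[of w k] w by auto
qed

lemma T_not_mr: "u \<in> T \<Longrightarrow> u \<noteq> v \<Longrightarrow> u \<notin> mr V par"
proof
  assume u: "u \<in> T" "u \<noteq> v" "u \<in> mr V par"
  then obtain k where k: "(par ^^ k) u = v" unfolding Tset_def by auto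
  then have "k \<ge> 1" using u by (cases k) auto
  then have "v = (par ^^ k) u \<and> k \<ge> 1 \<and> (par ^^ k) u \<noteq> 0" using k v0 by auto
  then have "v \<in> ancestors par u" unfolding ancestors_def by blast
  then have "v \<le> u" using u(3) unfolding mr_def by auto
  moreover have "u \<le> v" using u TV fin by auto
  ultimately show False using u by simp
qed

lemma v_mr: "v \<in> mr V par"
  unfolding mr_def using ancestors_sub[OF z F vV] fin vV by auto

lemma anc_R: "w \<in> R \<Longrightarrow> ancestors par w = ancestors (Hof V par) w"
  unfolding ancestors_def using H_agree by auto

lemma mr_split: "mr V par = insert v (mr R (Hof V par))"
proof (intro set_eqI iffI)
  fix w assume w: "w \<in> mr V par"
  show "w \<in> insert v (mr R (Hof V par))"
  proof (cases "w \<in> T")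
    case True
    then show ?thesis using T_not_mr w by auto
  next
    case False
    then have "w \<in> R" using w unfolding mr_def by auto
    then show ?thesis using w anc_R unfolding mr_def by auto
  qed
next
  fix w assume "w \<in> insert v (mr R (Hof V par))"
  then show "w \<in> mr V par" using v_mr anc_R unfolding mr_def by auto
qed

lemma sub_v: "sub V par v = T"
proof (intro set_eqI iffI)
  fix w assume "w \<in> sub V par v"
  then show "w \<in> T" unfolding sub_def Tset_def by auto
next
  fix w assume w: "w \<in> T"
  then have ex: "\<exists>k. (par ^^ k) w = v" unfolding Tset_def by auto
  define k where "k = (LEAST k. (par ^^ k) w = v)"
  have kv: "(par ^^ k) w = v" unfolding k_def using ex by (rule LeastI_ex)
  have "(par ^^ i) w \<notin> mr V par" if i: "i < k" for i
  proof -
    have ne: "(par ^^ i) w \<noteq> v" using not_less_Least[of i "\<lambda>k. (par ^^ k) w = v"] i unfolding k_def by auto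
    have eq: "(par ^^ (k - i)) ((par ^^ i) w) = v" using kv i
      by (metis funpow_add comp_apply le_add_diff_inverse2 less_imp_le)
    have "(par ^^ i) w \<in> insert 0 V" using path_in[OF z F] w TV by auto
    moreover have "(par ^^ i) w \<noteq> 0" using eq funpow_zero[of par, OF par0[OF z F]] v0 by metis
    ultimately have "(par ^^ i) w \<in> T" using eq unfolding Tset_def by auto
    then show ?thesis using T_not_mr ne by auto
  qed
  then show "w \<in> sub V par v" unfolding sub_def using w TV kv by auto
qed

lemma sub_R:
  assumes r: "r \<in> mr R (Hof V par)"
  shows "sub V par r = sub R (Hof V par) r"
proof (intro set_eqI iffI)
  have rR: "r \<in> R" using r unfolding mr_def by auto
  fix w assume "w \<in> sub V par r"
  then obtain k where w: "w \<in> V" and k: "(par ^^ k) w = r" and nm: "\<forall>i<k. (par ^^ i) w \<notin> mr V par"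
    unfolding sub_def by auto
  have wR: "w \<in> R"
  proof (rule ccontr)
    assume "w \<notin> R"
    then have "w \<in> T" using w by auto
    then obtain k0 where k0: "(par ^^ k0) w = v" unfolding Tset_def by auto
    show False
    proof (cases "k \<le> k0")
      case True
      then have "(par ^^ (k0 - k)) r = v" using k k0
        by (metis funpow_add comp_apply le_add_diff_inverse2)
      then have "r \<in> T" using rR unfolding Tset_def by auto
      then show False using rR by auto
    next
      case False
      then show False using nm[rule_format, of k0] k0 v_mr by auto
    qed
  qed
  have ag: "\<And>i. (par ^^ i) w = (Hof V par ^^ i) w"
    using H_agree wR by auto
  have "\<forall>i<k. (Hof V par ^^ i) w \<notin> mr R (Hof V par)"
  proof (intro allI impI)
    fix i assume "i < k"
    then have "(par ^^ i) w \<notin> mr V par" using nm by auto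
    then show "(Hof V par ^^ i) w \<notin> mr R (Hof V par)" using ag[of i] mr_split by auto
  qed
  moreover have "(Hof V par ^^ k) w = r" using ag[of k] k by simp
  ultimately show "w \<in> sub R (Hof V par) r" unfolding sub_def using wR by blast
next
  fix w assume "w \<in> sub R (Hof V par) r"
  then obtain k where w: "w \<in> R" and k: "(Hof V par ^^ k) w = r" and nm: "\<forall>i<k. (Hof V par ^^ i) w \<notin> mr R (Hof V par)"
    unfolding sub_def by auto
  have ag: "\<forall>i. (par ^^ i) w = (Hof V par ^^ i) w \<and> (par ^^ i) w \<in> insert 0 R"
  proof
    fix i show "(par ^^ i) w = (Hof V par ^^ i) w \<and> (par ^^ i) w \<in> insert 0 R"
      using H_agree[of w i] w by blast
  qed
  have "\<forall>i<k. (par ^^ i) w \<notin> mr V par"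
  proof (intro allI impI)
    fix i assume "i < k"
    then show "(par ^^ i) w \<notin> mr V par" using ag[rule_format, of i] nm mr_split vT v0 by auto
  qed
  then show "w \<in> sub V par r" unfolding sub_def using w ag k by auto
qed

lemma fstat_split: "fstat V par = fstat R (Hof V par) + {#card T#}"
proof -
  have finR: "finite (mr R (Hof V par))" using fin unfolding mr_def by auto
  have vn: "v \<notin> mr R (Hof V par)" using vT unfolding mr_def by auto
  have "fstat V par = image_mset (\<lambda>r. card (sub V par r)) (mset_set (mr R (Hof V par))) + {#card (sub V par v)#}"
    unfolding fstat_def mr_split using finR vn by (simp add: mset_set.insert_remove)
  also have "image_mset (\<lambda>r. card (sub V par r)) (mset_set (mr R (Hof V par)))
       = image_mset (\<lambda>r. card (sub R (Hof V par) r)) (mset_set (mr R (Hof V par)))"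
    by (rule image_mset_cong) (use sub_R finR in auto)
  finally show ?thesis unfolding fstat_def sub_v .
qed


lemma G_forest: "Gof V par \<in> forest_on (T - {v})"
proof (rule forestI)
  show "\<And>w. w \<notin> T - {v} \<Longrightarrow> Gof V par w = 0" by (auto simp: Gof_def)
  show "\<And>w. w \<in> T - {v} \<Longrightarrow> Gof V par w \<in> insert 0 (T - {v})"
    using par_T by (auto simp: Gof_def)
  fix w assume w: "w \<in> T - {v}"
  then have ex: "\<exists>k. (par ^^ k) w = v" unfolding Tset_def by auto
  define k0 where "k0 = (LEAST k. (par ^^ k) w = v)"
  have k0v: "(par ^^ k0) w = v" unfolding k0_def using ex by (rule LeastI_ex)
  have lt: "i < k0 \<Longrightarrow> (par ^^ i) w \<noteq> v" for i
    using not_less_Least[of i "\<lambda>k. (par ^^ k) w = v"] unfolding k0_def by auto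
  have cl: "i < k0 \<Longrightarrow> (Gof V par ^^ i) w = (par ^^ i) w \<and> (par ^^ i) w \<in> T - {v}" for i
  proof (induction i)
    case 0 then show ?case using w by simp
  next
    case (Suc i)
    then have IH: "(Gof V par ^^ i) w = (par ^^ i) w" "(par ^^ i) w \<in> T - {v}" by auto
    have pT: "par ((par ^^ i) w) \<in> T" using par_T IH(2) by auto
    have pv: "par ((par ^^ i) w) \<noteq> v" using lt[OF Suc.prems] by simp
    show ?case using IH pT pv by (simp add: Gof_def)
  qed
  have "k0 \<noteq> 0" using k0v w by (cases k0) auto
  then obtain k1 where k1: "k0 = Suc k1" by (cases k0) auto
  have u: "(Gof V par ^^ k1) w = (par ^^ k1) w" "(par ^^ k1) w \<in> T - {v}" using cl[of k1] k1 by auto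
  have "par ((par ^^ k1) w) = v" using k0v k1 by simp
  then have "(Gof V par ^^ k0) w = 0" using u k1 by (simp add: Gof_def)
  then show "\<exists>k. (Gof V par ^^ k) w = 0" by blast
qed

end

definition glue :: "nat set \<Rightarrow> nat set \<Rightarrow> (nat \<Rightarrow> nat) \<Rightarrow> (nat \<Rightarrow> nat) \<Rightarrow> nat \<Rightarrow> nat \<Rightarrow> nat" where
  "glue V W G H p = (\<lambda>w. if w = Max V then p else if w \<in> W then (if G w = 0 then Max V else G w) else H w)"

context
  fixes V W G H p
  assumes z: "0 \<notin> V" and fin: "finite V" and ne: "V \<noteq> {}"
    and W: "W \<subseteq> V - {Max V}" and G: "G \<in> forest_on W"
    and H: "H \<in> forest_on (V - {Max V} - W)" and p: "p \<in> insert 0 (V - {Max V} - W)"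
begin

abbreviation "vv \<equiv> Max V"
abbreviation "RR \<equiv> V - {Max V} - W"
abbreviation "P \<equiv> glue V W G H p"

lemma vvV: "vv \<in> V" using fin ne by simp
lemma vv0: "vv \<noteq> 0" using vvV z by metis

lemma P_R_step: "\<forall>w\<in>insert 0 RR. P w = H w \<and> P w \<in> insert 0 RR"
proof
  fix w assume w: "w \<in> insert 0 RR"
  have PH: "P w = H w" using w vv0 W z unfolding glue_def by auto
  have H0: "H 0 = 0" using forestD(1)[OF H] z by blast
  have "w = 0 \<or> w \<in> RR" using w by (simp only: insert_iff)
  moreover have "w \<in> RR \<Longrightarrow> H w \<in> insert 0 RR" using forestD(2)[OF H] by blast
  ultimately have "H w \<in> insert 0 RR" using H0 by auto
  then show "P w = H w \<and> P w \<in> insert 0 RR" using PH by simp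
qed

lemma P_R: "w \<in> insert 0 RR \<Longrightarrow> (P ^^ k) w = (H ^^ k) w \<and> (P ^^ k) w \<in> insert 0 RR"
  by (rule funpow_agree[OF P_R_step])

lemma P_W_reach: "w \<in> W \<Longrightarrow> \<exists>k. (P ^^ k) w = vv"
proof -
  assume w: "w \<in> W"
  have G0: "G 0 = 0" using forestD(1)[OF G] W z by auto
  have Gin: "(G ^^ k) w \<in> insert 0 W" for k
    using funpow_agree[of "insert 0 W" G G w k] forestD(2)[OF G] G0 w by auto
  have ag: "(G ^^ k) w \<noteq> 0 \<Longrightarrow> (P ^^ k) w = (G ^^ k) w" for k
  proof (induction k)
    case 0 then show ?case by simp
  next
    case (Suc k)
    have nz: "(G ^^ k) w \<noteq> 0" using Suc.prems G0 by (metis funpow.simps(2) comp_apply)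
    then have uW: "(G ^^ k) w \<in> W" using Gin[of k] by auto
    have "(P ^^ Suc k) w = P ((G ^^ k) w)" using Suc.IH[OF nz] by simp
    also have "\<dots> = G ((G ^^ k) w)" using uW W Suc.prems unfolding glue_def by auto
    finally show ?case by simp
  qed
  have ex: "\<exists>k. (G ^^ k) w = 0" using forestD(3)[OF G w] .
  define K where "K = (LEAST k. (G ^^ k) w = 0)"
  have K0: "(G ^^ K) w = 0" unfolding K_def using ex by (rule LeastI_ex)
  have "K \<noteq> 0" using K0 w W z by (cases K) auto
  then obtain K1 where K1: "K = Suc K1" by (cases K) auto
  have nz: "(G ^^ K1) w \<noteq> 0" using not_less_Least[of K1 "\<lambda>k. (G ^^ k) w = 0"] K1 unfolding K_def by auto
  then have uW: "(G ^^ K1) w \<in> W" using Gin[of K1] by auto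
  have Gu: "G ((G ^^ K1) w) = 0" using K0 K1 by simp
  have "(P ^^ K) w = P ((G ^^ K1) w)" using ag[OF nz] K1 by simp
  also have "\<dots> = vv" using uW W Gu unfolding glue_def by auto
  finally show ?thesis by blast
qed

lemma P_forest: "P \<in> forest_on V"
proof (rule forestI)
  show "\<And>w. w \<notin> V \<Longrightarrow> P w = 0" using vvV W forestD(1)[OF H] unfolding glue_def by auto
  show "\<And>w. w \<in> V \<Longrightarrow> P w \<in> insert 0 V"
  proof -
    fix w assume w: "w \<in> V"
    have "G w \<noteq> 0 \<Longrightarrow> w \<in> W \<Longrightarrow> G w \<in> V" using forestD(2)[OF G, of w] W by auto
    then show "P w \<in> insert 0 V"
      using p W forestD(2)[OF H, of w] vvV w unfolding glue_def by auto
  qed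
  have Rr: "w \<in> insert 0 RR \<Longrightarrow> \<exists>k. (P ^^ k) w = 0" for w
  proof -
    assume w: "w \<in> insert 0 RR"
    show ?thesis
    proof (cases "w = 0")
      case True then show ?thesis by (auto intro: exI[of _ 0])
    next
      case False
      then obtain k where "(H ^^ k) w = 0" using forestD(3)[OF H] w by blast
      then show ?thesis using P_R[OF w, of k] by auto
    qed
  qed
  have vr: "\<exists>k. (P ^^ k) vv = 0"
  proof -
    obtain k where "(P ^^ k) p = 0" using Rr p by blast
    moreover have "(P ^^ Suc k) vv = (P ^^ k) (P vv)" by (simp only: funpow_Suc_right comp_apply)
    moreover have "P vv = p" unfolding glue_def by simp
    ultimately show ?thesis by metis
  qed
  fix w assume w: "w \<in> V"
  show "\<exists>k. (P ^^ k) w = 0"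
  proof (cases "w = vv")
    case True then show ?thesis using vr by simp
  next
    case False
    show ?thesis
    proof (cases "w \<in> W")
      case True
      obtain k1 where k1: "(P ^^ k1) w = vv" using P_W_reach[OF True] by blast
      obtain k2 where k2: "(P ^^ k2) vv = 0" using vr by blast
      have "(P ^^ (k2 + k1)) w = 0" using k1 k2 by (simp add: funpow_add)
      then show ?thesis by blast
    next
      case False
      then show ?thesis using Rr w \<open>w \<noteq> vv\<close> by auto
    qed
  qed
qed

lemma P_T: "Tset V P = insert vv W"
proof (intro set_eqI iffI)
  fix w assume w: "w \<in> Tset V P"
  then obtain k where k: "(P ^^ k) w = vv" and wV: "w \<in> V" unfolding Tset_def by blast
  show "w \<in> insert vv W"
  proof (rule ccontr)
    assume "w \<notin> insert vv W"
    then have "w \<in> insert 0 RR" using wV by simp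
    then have "(P ^^ k) w \<in> insert 0 RR" by (rule P_R[THEN conjunct2])
    then have "vv \<in> insert 0 RR" using k by simp
    then show False using vv0 by blast
  qed
next
  fix w assume w: "w \<in> insert vv W"
  show "w \<in> Tset V P"
  proof (cases "w = vv")
    case True
    have "(P ^^ 0) w = vv" using True by simp
    then show ?thesis unfolding Tset_def using vvV True by blast
  next
    case False
    then have wW: "w \<in> W" using w by blast
    then have "w \<in> V" using W by blast
    then show ?thesis unfolding Tset_def using P_W_reach[OF wW] by blast
  qed
qed

lemma P_TW: "Tset V P - {vv} = W" using P_T W by blast
lemma P_TR: "V - Tset V P = RR" using P_T W by blast

lemma P_fwd: "Gof V P = G" "Hof V P = H" "P vv = p"
proof -
  show "Gof V P = G"
  proof
    fix w
    show "Gof V P w = G w"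
    proof (cases "w \<in> W")
      case True
      have wv: "w \<noteq> vv" using True W by blast
      have Pw: "P w = (if G w = 0 then vv else G w)" using wv True unfolding glue_def by simp
      have "G w \<noteq> 0 \<Longrightarrow> G w \<noteq> vv" using forestD(2)[OF G True] W by auto
      then show ?thesis unfolding Gof_def P_TW using True Pw by simp
    next
      case False
      then show ?thesis using forestD(1)[OF G False] unfolding Gof_def P_TW by simp
    qed
  qed
  show "Hof V P = H"
  proof
    fix w
    show "Hof V P w = H w"
    proof (cases "w \<in> RR")
      case True
      then have "P w = H w" using P_R_step by blast
      then show ?thesis unfolding Hof_def P_TR using True by simp
    next
      case False
      have "w \<notin> V - Tset V P" using False P_TR by simp
      then have "Hof V P w = 0" unfolding Hof_def by (simp only: if_False)
      then show ?thesis using forestD(1)[OF H False] by simp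
    qed
  qed
  show "P vv = p" unfolding glue_def by simp
qed

end

lemma glue_fwd:
  assumes z: "0 \<notin> V" and F: "par \<in> forest_on V" and fin: "finite V" and ne: "V \<noteq> {}"
  shows "glue V (Tset V par - {Max V}) (Gof V par) (Hof V par) (par (Max V)) = par"
proof
  fix w
  show "glue V (Tset V par - {Max V}) (Gof V par) (Hof V par) (par (Max V)) w = par w"
  proof (cases "w \<in> Tset V par - {Max V}")
    case True
    have "par w \<in> Tset V par" using par_T[OF z F fin ne] True by blast
    then have "par w \<in> V" using TV[OF z F fin ne] by blast
    then have "par w \<noteq> 0" using z by metis
    have wv: "w \<noteq> Max V" using True by blast
    show ?thesis
    proof (cases "par w = Max V")
      case True
      then show ?thesis using \<open>w \<in> Tset V par - {Max V}\<close> wv by (simp add: glue_def Gof_def)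
    next
      case False
      then show ?thesis using \<open>w \<in> Tset V par - {Max V}\<close> wv \<open>par w \<noteq> 0\<close> by (simp add: glue_def Gof_def)
    qed
  next
    case False
    show ?thesis
    proof (cases "w = Max V")
      case True then show ?thesis by (simp add: glue_def)
    next
      case wv: False
      show ?thesis
      proof (cases "w \<in> V")
        case True
        then have "w \<in> V - Tset V par" using False wv by blast
        then show ?thesis using False wv by (simp add: glue_def Hof_def)
      next
        case nV: False
        then have "w \<notin> V - Tset V par" by blast
        then show ?thesis using False wv nV forestD(1)[OF F nV] by (simp add: glue_def Hof_def)
      qed
    qed
  qed
qed


definition EF :: "nat set \<Rightarrow> nat multiset \<Rightarrow> (nat set \<times> (nat \<Rightarrow> nat) \<times> (nat \<Rightarrow> nat) \<times> nat) set" where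
  "EF V M = (SIGMA W:Pow (V - {Max V}). forest_on W \<times>
      {H \<in> forest_on (V - {Max V} - W). fstat (V - {Max V} - W) H + {#Suc (card W)#} = M} \<times>
      insert 0 (V - {Max V} - W))"

definition fwdF :: "nat set \<Rightarrow> (nat \<Rightarrow> nat) \<Rightarrow> nat set \<times> (nat \<Rightarrow> nat) \<times> (nat \<Rightarrow> nat) \<times> nat" where
  "fwdF V par = (Tset V par - {Max V}, Gof V par, Hof V par, par (Max V))"

definition bwdF :: "nat set \<Rightarrow> nat set \<times> (nat \<Rightarrow> nat) \<times> (nat \<Rightarrow> nat) \<times> nat \<Rightarrow> nat \<Rightarrow> nat" where
  "bwdF V = (\<lambda>(W, G, H, p). glue V W G H p)"

lemma forest_bij:
  assumes z: "0 \<notin> V" and fin: "finite V" and ne: "V \<noteq> {}"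
  shows "bij_betw (fwdF V) {par \<in> forest_on V. fstat V par = M} (EF V M)"
proof (rule bij_betw_byWitness[where f' = "bwdF V"])
  show "\<forall>a\<in>{par \<in> forest_on V. fstat V par = M}. bwdF V (fwdF V a) = a"
    using glue_fwd[OF z _ fin ne] by (auto simp: bwdF_def fwdF_def)
next
  show "\<forall>y\<in>EF V M. fwdF V (bwdF V y) = y"
  proof
    fix y assume "y \<in> EF V M"
    then obtain W G H p where y: "y = (W, G, H, p)" and W: "W \<subseteq> V - {Max V}" and G: "G \<in> forest_on W"
      and H: "H \<in> forest_on (V - {Max V} - W)" and p: "p \<in> insert 0 (V - {Max V} - W)"
      unfolding EF_def by auto
    show "fwdF V (bwdF V y) = y" unfolding y bwdF_def fwdF_def
      using P_TW[OF z fin ne W G H p] P_fwd[OF z fin ne W G H p] by simp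
  qed
next
  show "fwdF V ` {par \<in> forest_on V. fstat V par = M} \<subseteq> EF V M"
  proof
    fix y assume "y \<in> fwdF V ` {par \<in> forest_on V. fstat V par = M}"
    then obtain par where F: "par \<in> forest_on V" and M: "fstat V par = M" and y: "y = fwdF V par" by auto
    have vT: "Max V \<in> Tset V par" by (rule vT[OF z F fin ne])
    have TV: "Tset V par \<subseteq> V" by (rule TV[OF z F fin ne])
    have finT: "finite (Tset V par)" using TV fin finite_subset by blast
    have cT: "card (Tset V par) = Suc (card (Tset V par - {Max V}))"
      using card_Suc_Diff1[OF finT vT] by simp
    have R: "V - {Max V} - (Tset V par - {Max V}) = V - Tset V par" using vT by blast
    have a1: "Tset V par - {Max V} \<in> Pow (V - {Max V})" using TV by blast
    have a2: "Hof V par \<in> {H \<in> forest_on (V - {Max V} - (Tset V par - {Max V})).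
       fstat (V - {Max V} - (Tset V par - {Max V})) H + {#Suc (card (Tset V par - {Max V}))#} = M}"
      unfolding R using H_forest[OF z F fin ne] fstat_split[OF z F fin ne] M cT by simp
    have a3: "par (Max V) \<in> insert 0 (V - {Max V} - (Tset V par - {Max V}))"
      unfolding R by (rule par_v[OF z F fin ne])
    show "y \<in> EF V M" unfolding y fwdF_def EF_def
      using a1 a2 a3 G_forest[OF z F fin ne] by blast
  qed
next
  show "bwdF V ` EF V M \<subseteq> {par \<in> forest_on V. fstat V par = M}"
  proof
    fix par assume "par \<in> bwdF V ` EF V M"
    then obtain W G H p where par: "par = glue V W G H p" and W: "W \<subseteq> V - {Max V}" and G: "G \<in> forest_on W"
      and H: "H \<in> forest_on (V - {Max V} - W)" and p: "p \<in> insert 0 (V - {Max V} - W)"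
      and M: "fstat (V - {Max V} - W) H + {#Suc (card W)#} = M"
      unfolding EF_def bwdF_def by auto
    have PF: "par \<in> forest_on V" unfolding par by (rule P_forest[OF z fin ne W G H p])
    have finW: "finite W" using W fin finite_subset by blast
    have cT: "card (Tset V par) = Suc (card W)"
    proof -
      have "Max V \<notin> W" using W by blast
      then show ?thesis unfolding par P_T[OF z fin ne W G H p] using finW by simp
    qed
    have "fstat V par = fstat (V - Tset V par) (Hof V par) + {#card (Tset V par)#}"
      by (rule fstat_split[OF z PF fin ne])
    also have "\<dots> = M" unfolding cT using M P_TR[OF z fin ne W G H p] P_fwd(2)[OF z fin ne W G H p]
      unfolding par by simp
    finally show "par \<in> {par \<in> forest_on V. fstat V par = M}" using PF by simp
  qed
qed



lemma fiber_bij: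
  assumes fA: "finite A" and fB: "finite B"
    and C: "\<And>y. card {a\<in>A. f a = y} = card {b\<in>B. g b = y}"
  shows "\<exists>h. bij_betw h A B \<and> (\<forall>a\<in>A. g (h a) = f a)"
proof -
  define FA where "FA y = {a\<in>A. f a = y}" for y
  define FB where "FB y = {b\<in>B. g b = y}" for y
  have ex: "\<exists>h. bij_betw h (FA y) (FB y)" for y
    using finite_same_card_bij[of "FA y" "FB y"] fA fB C unfolding FA_def FB_def by auto
  define hy where "hy y = (SOME h. bij_betw h (FA y) (FB y))" for y
  have hy: "bij_betw (hy y) (FA y) (FB y)" for y unfolding hy_def using ex[of y] by (rule someI_ex)
  define h where "h a = hy (f a) a" for a
  have map: "a \<in> A \<Longrightarrow> h a \<in> B \<and> g (h a) = f a" for a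
  proof -
    assume a: "a \<in> A"
    then have "a \<in> FA (f a)" unfolding FA_def by simp
    then have "hy (f a) a \<in> FB (f a)" using hy[of "f a"] bij_betwE by blast
    then show ?thesis unfolding h_def FB_def by simp
  qed
  have inj: "inj_on h A"
  proof
    fix a a' assume a: "a \<in> A" "a' \<in> A" "h a = h a'"
    then have fe: "f a = f a'" using map by metis
    have "a \<in> FA (f a)" "a' \<in> FA (f a)" unfolding FA_def using a fe by auto
    moreover have "hy (f a) a = hy (f a) a'" using a(3) fe unfolding h_def by simp
    ultimately show "a = a'" using hy[of "f a"] unfolding bij_betw_def inj_on_def by blast
  qed
  have surj: "h ` A = B"
  proof
    show "h ` A \<subseteq> B" using map by auto
    show "B \<subseteq> h ` A"
    proof
      fix b assume b: "b \<in> B"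
      then have "b \<in> FB (g b)" unfolding FB_def by simp
      moreover have "hy (g b) ` FA (g b) = FB (g b)" using hy[of "g b"] unfolding bij_betw_def by blast
      ultimately obtain a where a: "a \<in> FA (g b)" "hy (g b) a = b" by (metis imageE)
      then have "a \<in> A" "f a = g b" unfolding FA_def by auto
      then have "h a = b" using a unfolding h_def by simp
      then show "b \<in> h ` A" using \<open>a \<in> A\<close> by blast
    qed
  qed
  show ?thesis using inj surj map unfolding bij_betw_def by blast
qed

lemma bij_card_pred:
  assumes "bij_betw h A B" "\<forall>a\<in>A. g (h a) = f a"
  shows "card {a\<in>A. Q (f a)} = card {b\<in>B. Q (g b)}"
proof -
  have "bij_betw h {a\<in>A. Q (f a)} {b\<in>B. Q (g b)}"
    using assms unfolding bij_betw_def inj_on_def by (auto simp: image_iff)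
  then show ?thesis by (rule bij_betw_same_card)
qed

lemma finite_pf: "finite (parking_functions n)"
proof -
  have "parking_functions n \<subseteq> {s. set s \<subseteq> {1..n} \<and> length s = n}"
    unfolding parking_functions_def by auto
  then show ?thesis using finite_lists_length_eq[of "{1..n}" n] finite_subset by blast
qed

lemma finite_forest: "finite V \<Longrightarrow> finite (forest_on V)"
proof -
  assume fV: "finite V"
  have "forest_on V \<subseteq> {f. \<forall>x. (x \<in> V \<longrightarrow> f x \<in> insert 0 V) \<and> (x \<notin> V \<longrightarrow> f x = 0)}"
    unfolding forest_on_def by auto
  then show ?thesis using finite_set_of_finite_funs[of V "insert 0 V" 0] fV finite_subset by blast
qed

lemma sum_masks:
  "(\<Sum>bs\<in>{bs::bool list. length bs = L}. g (length (filter id bs))) = (\<Sum>S\<in>Pow {..<L}. g (card S))"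
proof -
  have b: "bij_betw (\<lambda>bs. {i. i < L \<and> bs ! i}) {bs::bool list. length bs = L} (Pow {..<L})"
  proof (rule bij_betw_byWitness[where f' = "\<lambda>S. map (\<lambda>i. i \<in> S) [0..<L]"])
    show "\<forall>bs\<in>{bs::bool list. length bs = L}. map (\<lambda>i. i \<in> {i. i < L \<and> bs ! i}) [0..<L] = bs"
      by (auto intro: nth_equalityI)
    show "\<forall>S\<in>Pow {..<L}. {i. i < L \<and> map (\<lambda>i. i \<in> S) [0..<L] ! i} = S" by auto
    show "(\<lambda>bs. {i. i < L \<and> bs ! i}) ` {bs. length bs = L} \<subseteq> Pow {..<L}" by auto
    show "(\<lambda>S. map (\<lambda>i. i \<in> S) [0..<L]) ` Pow {..<L} \<subseteq> {bs. length bs = L}" by auto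
  qed
  have "(\<Sum>bs\<in>{bs::bool list. length bs = L}. g (length (filter id bs)))
      = (\<Sum>bs\<in>{bs::bool list. length bs = L}. g (card {i. i < L \<and> bs ! i}))"
    by (rule sum.cong) (auto simp: length_filter_conv_card)
  also have "\<dots> = (\<Sum>S\<in>Pow {..<L}. g (card S))"
    using sum.reindex_bij_betw[OF b, of "\<lambda>S. g (card S)"] by simp
  finally show ?thesis .
qed

lemma sum_pow_card:
  assumes "finite A" "finite B" "card A = card B"
  shows "(\<Sum>S\<in>Pow A. g (card S)) = (\<Sum>S\<in>Pow B. g (card S))"
proof -
  obtain f where f: "bij_betw f A B" using finite_same_card_bij assms by blast
  have b: "bij_betw (image f) (Pow A) (Pow B)" by (rule bij_betw_Pow[OF f])
  have "(\<Sum>S\<in>Pow A. g (card S)) = (\<Sum>S\<in>Pow A. g (card (f ` S)))"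
  proof (rule sum.cong)
    fix S assume "S \<in> Pow A"
    then have "inj_on f S" using f unfolding bij_betw_def by (auto intro: inj_on_subset)
    then show "g (card S) = g (card (f ` S))" by (simp add: card_image)
  qed simp
  also have "\<dots> = (\<Sum>S\<in>Pow B. g (card S))" using sum.reindex_bij_betw[OF b, of "\<lambda>S. g (card S)"] by simp
  finally show ?thesis .
qed


lemma pf_zero: "parking_functions 0 = {[]}"
  unfolding parking_functions_def by (auto simp: can_park_def)

lemma forest_empty: "forest_on {} = {\<lambda>_. 0}"
  unfolding forest_on_def by auto

lemma fstat_empty: "fstat {} F = {#}"
  unfolding fstat_def mr_def by simp

lemma IH_bij:
  assumes "finite W" "0 \<notin> W"
    and "\<And>M. card {s \<in> parking_functions (card W). incs s = M} = card {F \<in> forest_on W. fstat W F = M}"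
  shows "\<exists>h. bij_betw h (parking_functions (card W)) (forest_on W) \<and>
            (\<forall>s\<in>parking_functions (card W). fstat W (h s) = incs s)"
  by (rule fiber_bij) (use assms finite_pf finite_forest in auto)

lemma main_fibers:
  "finite V \<Longrightarrow> 0 \<notin> V \<Longrightarrow>
   card {s \<in> parking_functions (card V). incs s = M} = card {F \<in> forest_on V. fstat V F = M}"
proof (induction "card V" arbitrary: V M rule: less_induct)
  case less
  note fin = less.prems(1) and z = less.prems(2)
  show ?case
  proof (cases "V = {}")
    case True
    have a: "{s. s = [] \<and> incs s = M} = (if M = {#} then {[]} else {})" by auto
    have b: "{F::nat\<Rightarrow>nat. F = (\<lambda>_. 0) \<and> M = {#}} = (if M = {#} then {\<lambda>_. 0} else {})" by auto
    show ?thesis using True by (simp add: pf_zero forest_empty fstat_empty a b)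
  next
    case ne: False
    define n where "n = card V"
    have n1: "1 \<le> n" using ne fin n_def by (simp add: Suc_leI card_gt_0_iff)
    define v where "v = Max V"
    have vV: "v \<in> V" using fin ne v_def by simp
    have cV1: "card (V - {v}) = n - 1" using vV fin n_def by simp
    define g where "g k = card {t1 \<in> parking_functions (n - 1 - k). incs t1 + {#Suc k#} = M} *
        (card (parking_functions k) * Suc (n - 1 - k))" for k
    have lhs: "card {s \<in> parking_functions n. incs s = M} = card (DP n M)"
      by (rule bij_betw_same_card[OF pf_bij[OF n1]])
    have finBL: "finite {bs::bool list. length bs = n - 1}"
      using finite_lists_length_eq[of "UNIV :: bool set" "n - 1"] by simp
    have "card (DP n M) = (\<Sum>bs\<in>{bs::bool list. length bs = n - 1}. g (length (filter id bs)))"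
    proof -
      have "card (DP n M) = (\<Sum>bs\<in>{bs::bool list. length bs = n - 1}.
          card ({t1 \<in> parking_functions (n - 1 - length (filter id bs)). incs t1 + {#n - (n - 1 - length (filter id bs))#} = M}
            \<times> parking_functions (length (filter id bs)) \<times> {1..Suc (n - 1 - length (filter id bs))}))"
        unfolding DP_def
      proof (rule card_SigmaI[OF finBL])
        show "\<forall>bs\<in>{bs::bool list. length bs = n - 1}. finite ({t1 \<in> parking_functions (n - 1 - length (filter id bs)). incs t1 + {#n - (n - 1 - length (filter id bs))#} = M}
            \<times> parking_functions (length (filter id bs)) \<times> {1..Suc (n - 1 - length (filter id bs))})"
          by (simp add: finite_pf)
      qed
      also have "\<dots> = (\<Sum>bs\<in>{bs::bool list. length bs = n - 1}. g (length (filter id bs)))"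
      proof (rule sum.cong)
        fix bs assume "bs \<in> {bs::bool list. length bs = n - 1}"
        then have "length (filter id bs) \<le> n - 1" using length_filter_le[of id bs] by simp
        then have e: "n - (n - 1 - length (filter id bs)) = Suc (length (filter id bs))" using n1 by simp
        show "card ({t1 \<in> parking_functions (n - 1 - length (filter id bs)). incs t1 + {#n - (n - 1 - length (filter id bs))#} = M}
            \<times> parking_functions (length (filter id bs)) \<times> {1..Suc (n - 1 - length (filter id bs))}) = g (length (filter id bs))"
          unfolding g_def e by (simp add: card_cartesian_product)
      qed simp
      finally show ?thesis .
    qed
    also have "\<dots> = (\<Sum>S\<in>Pow {..<n - 1}. g (card S))" by (rule sum_masks)
    also have "\<dots> = (\<Sum>S\<in>Pow (V - {v}). g (card S))"
      by (rule sum_pow_card) (use fin cV1 in auto)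
    finally have L: "card {s \<in> parking_functions n. incs s = M} = (\<Sum>S\<in>Pow (V - {v}). g (card S))"
      using lhs by simp
    have rhs: "card {F \<in> forest_on V. fstat V F = M} = card (EF V M)"
      by (rule bij_betw_same_card[OF forest_bij[OF z fin ne]])
    have "card (EF V M) = (\<Sum>W\<in>Pow (V - {v}). card (forest_on W) *
         (card {H \<in> forest_on (V - {v} - W). fstat (V - {v} - W) H + {#Suc (card W)#} = M} *
          card (insert 0 (V - {v} - W))))"
      unfolding EF_def v_def[symmetric]
    proof (subst card_SigmaI)
      show "finite (Pow (V - {v}))" using fin by simp
      show "\<forall>W\<in>Pow (V - {v}). finite (forest_on W \<times>
         {H \<in> forest_on (V - {v} - W). fstat (V - {v} - W) H + {#Suc (card W)#} = M} \<times>
         insert 0 (V - {v} - W))"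
        using fin by (auto intro!: finite_cartesian_product finite_forest intro: finite_subset)
    qed (simp add: card_cartesian_product)
    also have "\<dots> = (\<Sum>W\<in>Pow (V - {v}). g (card W))"
    proof (rule sum.cong)
      fix W assume W: "W \<in> Pow (V - {v})"
      let ?R = "V - {v} - W"
      have finW: "finite W" using W fin finite_subset by auto
      have finR: "finite ?R" using fin by auto
      have zW: "0 \<notin> W" using W z by auto
      have zR: "0 \<notin> ?R" using z by auto
      have "card W \<le> card (V - {v})" using W fin by (intro card_mono) auto
      then have cW: "card W < card V" using cV1 n1 n_def by linarith
      have cR: "card ?R = n - 1 - card W" using W finW fin cV1 by (simp add: card_Diff_subset)
      have cR2: "card ?R < card V" using cR n1 n_def by simp
      obtain hW where hW: "bij_betw hW (parking_functions (card W)) (forest_on W)"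
        using IH_bij[OF finW zW less.hyps[OF cW finW zW]] by blast
      obtain hR where hR: "bij_betw hR (parking_functions (card ?R)) (forest_on ?R)"
        "\<forall>s\<in>parking_functions (card ?R). fstat ?R (hR s) = incs s"
        using IH_bij[OF finR zR less.hyps[OF cR2 finR zR]] by blast
      have e1: "card (forest_on W) = card (parking_functions (card W))"
        using bij_betw_same_card[OF hW] by simp
      have e2: "card {H \<in> forest_on ?R. fstat ?R H + {#Suc (card W)#} = M}
             = card {t1 \<in> parking_functions (card ?R). incs t1 + {#Suc (card W)#} = M}"
        using bij_card_pred[where h=hR and g="fstat ?R" and f=incs and Q="\<lambda>X. X + {#Suc (card W)#} = M", OF hR] by simp
      have e3: "card (insert 0 ?R) = Suc (n - 1 - card W)" using finR zR cR by simp
      show "card (forest_on W) * (card {H \<in> forest_on ?R. fstat ?R H + {#Suc (card W)#} = M} *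
          card (insert 0 ?R)) = g (card W)"
        unfolding e1 e2 e3 g_def cR by (simp only: mult.assoc mult.left_commute)
    qed simp
    finally show ?thesis using L rhs n_def by simp
  qed
qed


lemma count_img: "finite A \<Longrightarrow> count (image_mset f (mset_set A)) b = card {a \<in> A. f a = b}"
proof -
  assume fA: "finite A"
  have "count (image_mset f (mset_set A)) b = (\<Sum>y\<in>f -` {b} \<inter> A. 1)"
    unfolding count_image_mset using fA by (intro sum.cong) auto
  also have "\<dots> = card {a \<in> A. f a = b}" by (simp add: vimage_def Int_def conj_commute)
  finally show ?thesis .
qed

lemma count_filter_map: "j \<noteq> 0 \<Longrightarrow> count (mset (filter (\<lambda>d. d \<noteq> 0) (map f xs))) j = length (filter (\<lambda>k. f k = j) xs)"
  by (induction xs) auto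

lemma size_filter_map: "size (mset (filter (\<lambda>d. d \<noteq> 0) (map f xs))) = length (filter (\<lambda>k. f k \<noteq> 0) xs)"
  by (simp only: size_mset filter_map) (simp add: comp_def)

lemma length_filter_upt: "length (filter Q [1..<Suc n]) = card {k \<in> {1..n}. Q k}"
proof -
  have "length (filter Q [1..<Suc n]) = card (set (filter Q [1..<Suc n]))"
    by (rule distinct_card[symmetric]) simp
  also have "set (filter Q [1..<Suc n]) = {k \<in> {1..n}. Q k}" by auto
  finally show ?thesis .
qed

lemma incs_stats:
  assumes pf: "s \<in> parking_functions n"
  shows "num_increments n s = size (incs s)"
    "j \<ge> 1 \<Longrightarrow> num_increments_of n s j = count (incs s) j"
proof -
  have len: "length s = n" using pfD(1)[OF pf] .
  have vals: "\<forall>a\<in>set s. 1 \<le> a" using pfD(2)[OF pf] by auto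
  define f where "f k = cl (take k s) - cl (take (k - 1) s)" for k
  have inc: "k \<in> {1..n} \<Longrightarrow> increment n s k = f k" for k
  proof -
    assume k: "k \<in> {1..n}"
    have "init_cluster (occupied n s k) = cl (take k s)" using cluster_static[OF vals, of k n] k len by simp
    moreover have "init_cluster (occupied n s (k - 1)) = cl (take (k - 1) s)"
      using cluster_static[OF vals, of "k - 1" n] k len by auto
    ultimately show ?thesis unfolding increment_def f_def by simp
  qed
  have incs_eq: "incs s = mset (filter (\<lambda>d. d \<noteq> 0) (map f [1..<Suc n]))"
    unfolding incs_def f_def len ..
  have "num_increments n s = card {k \<in> {1..n}. f k \<noteq> 0}"
    unfolding num_increments_def using inc by (intro arg_cong[where f = card]) auto
  then show "num_increments n s = size (incs s)"
    unfolding incs_eq size_filter_map length_filter_upt by simp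
  assume j: "j \<ge> 1"
  have "num_increments_of n s j = card {k \<in> {1..n}. f k = j}"
    unfolding num_increments_of_def using inc by (intro arg_cong[where f = card]) auto
  then show "num_increments_of n s j = count (incs s) j"
    unfolding incs_eq using count_filter_map[of j f] j length_filter_upt by simp
qed

lemma forests_eq: "forests n = forest_on {1..n}"
  unfolding forests_def forest_on_def by auto

lemma mr_eq: "max_records n par = mr {1..n} par"
  unfolding max_records_def mr_def by simp

lemma sub_eq: "max_record_subtree n par r = sub {1..n} par r"
  unfolding max_record_subtree_def sub_def mr_eq by simp

theorem proposition4:
  fixes n :: nat
  assumes "n \<ge> 1"
  shows "\<exists>f. bij_betw f (parking_functions n) (forests n) \<and>
           (\<forall>s \<in> parking_functions n.
              num_increments n s = card (max_records n (f s)) \<and>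
              (\<forall>j \<ge> 1. num_increments_of n s j =
                 card {r \<in> max_records n (f s). card (max_record_subtree n (f s) r) = j}))"
proof -
  have fin: "finite {1..n}" and z: "0 \<notin> {1..n::nat}" by auto
  obtain h where h: "bij_betw h (parking_functions (card {1..n})) (forest_on {1..n})"
    "\<forall>s\<in>parking_functions (card {1..n}). fstat {1..n} (h s) = incs s"
    using IH_bij[OF fin z main_fibers[OF fin z]] by blast
  have cn: "card {1..n} = n" by simp
  show ?thesis
  proof (intro exI conjI ballI allI impI)
    show "bij_betw h (parking_functions n) (forests n)" using h(1) unfolding cn forests_eq .
  next
    fix s assume s: "s \<in> parking_functions n"
    have fs: "fstat {1..n} (h s) = incs s" using h(2) s cn by simp
    have fmr: "finite (mr {1..n} (h s))" unfolding mr_def by simp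
    show "num_increments n s = card (max_records n (h s))"
      unfolding incs_stats(1)[OF s] fs[symmetric] mr_eq fstat_def by simp
    fix j :: nat assume j: "j \<ge> 1"
    show "num_increments_of n s j = card {r \<in> max_records n (h s). card (max_record_subtree n (h s) r) = j}"
      unfolding incs_stats(2)[OF s j] fs[symmetric] mr_eq sub_eq fstat_def using count_img[OF fmr] by simp
  qed
qed


end
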